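(* Let $n,d,\ell$ be positive integers with $n\geqslant\ell\geqslant d$, let $0<\beta\leqslant1$, and let $\boldsymbol{X}$ be a spreadable, $d$-dimensional random array on $[n]$ whose entries take values in a measurable space $\mathcal{X}$, and assume that $\boldsymbol{X}$ is not $(\beta,\ell)$-dissociated. Then there exists a measurable function $f\colon\mathcal{X}^{\binom{[n]}{d}}\to\{0,1\}$ such that for every $I\in\binom{[n]}{\ell}$, \[ \mathbb{P}\big(\big|\mathbb{E}[f(\boldsymbol{X})\,|\,\mathcal{F}_I]-\mathbb{E}[f(\boldsymbol{X})]\big|\geqslant\beta/2\big)\geqslant\beta/2. \]
   Context: $[n]=\{1,\dots,n\}$, $\binom{I}{d}$ is the set of $d$-element subsets of $I$. For $J\subseteq[n]$ with $|J|\geqslant d$, $\boldsymbol{X}_J=\langle X_s:s\in\binom{J}{d}\rangle$ and $\mathcal{F}_J=\sigma(\{X_s:s\in\binom{J}{d}\})$. $\boldsymbol{X}$ is spreadable if for all $J,K\subseteq[n]$ with $|J|=|K|\geqslant d$, $\boldsymbol{X}_J$ and $\boldsymbol{X}_K$ have the same law (identified via the increasing bijection $J\to K$). $\boldsymbol{X}$ is $(\beta,\ell)$-dissociated if for every $J,K\subseteq[n]$ with $|J|,|K|\geqslant d$, $|J|+|K|\leqslant\ell$ and $\max(J)<\min(K)$, and all events $A\in\mathcal{F}_J$, $B\in\mathcal{F}_K$, $|\mathbb{P}(A\cap B)-\mathbb{P}(A)\mathbb{P}(B)|\leqslant\beta$. *)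

theory Defs
  imports "HOL-Probability.Probability"
begin

definition dsubsets :: "nat set \<Rightarrow> nat \<Rightarrow> nat set set" where
  "dsubsets I d = {s. s \<subseteq> I \<and> card s = d}"

definition gen_alg :: "'a measure \<Rightarrow> (nat set \<Rightarrow> 'a \<Rightarrow> 'b) \<Rightarrow> 'b measure \<Rightarrow> nat \<Rightarrow> nat set \<Rightarrow> 'a measure" where
  "gen_alg M X N d J = sigma (space M) {X s -` A \<inter> space M | s A. s \<in> dsubsets J d \<and> A \<in> sets N}"

definition spreadable :: "'a measure \<Rightarrow> (nat set \<Rightarrow> 'a \<Rightarrow> 'b) \<Rightarrow> 'b measure \<Rightarrow> nat \<Rightarrow> nat \<Rightarrow> bool" where
  "spreadable M X N n d \<longleftrightarrow>
    (\<forall>J K \<phi>. J \<subseteq> {1..n} \<and> K \<subseteq> {1..n} \<and> card J = card K \<and> d \<le> card J \<and>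
       strict_mono_on J \<phi> \<and> bij_betw \<phi> J K \<longrightarrow>
       distr M (PiM (dsubsets J d) (\<lambda>_. N)) (\<lambda>\<omega>. \<lambda>s\<in>dsubsets J d. X (\<phi> ` s) \<omega>)
       = distr M (PiM (dsubsets J d) (\<lambda>_. N)) (\<lambda>\<omega>. \<lambda>s\<in>dsubsets J d. X s \<omega>))"

definition dissociated :: "'a measure \<Rightarrow> (nat set \<Rightarrow> 'a \<Rightarrow> 'b) \<Rightarrow> 'b measure \<Rightarrow> nat \<Rightarrow> nat \<Rightarrow> real \<Rightarrow> nat \<Rightarrow> bool" where
  "dissociated M X N n d \<beta> l \<longleftrightarrow>
    (\<forall>J K. J \<subseteq> {1..n} \<and> K \<subseteq> {1..n} \<and> d \<le> card J \<and> d \<le> card K \<and>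
       card J + card K \<le> l \<and> Max J < Min K \<longrightarrow>
       (\<forall>A \<in> sets (gen_alg M X N d J). \<forall>B \<in> sets (gen_alg M X N d K).
          \<bar>measure M (A \<inter> B) - measure M A * measure M B\<bar> \<le> \<beta>))"

end

theory Submission imports Defs begin

lemma mono_bij_exists:
  fixes S T :: "nat set"
  assumes "finite S" "finite T" "card S = card T"
  shows "\<exists>\<phi>. strict_mono_on S \<phi> \<and> bij_betw \<phi> S T"
  using assms
proof (induction "card S" arbitrary: S T)
  case 0
  then show ?case by (auto simp: strict_mono_on_def bij_betw_def)
next
  case (Suc k)
  then have ne: "S \<noteq> {}" "T \<noteq> {}" by auto
  define S' where "S' = S - {Max S}"
  define T' where "T' = T - {Max T}"
  have "card S' = k" "card T' = k" using Suc ne by (auto simp: S'_def T'_def)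
  then obtain \<phi> where ph: "strict_mono_on S' \<phi>" "bij_betw \<phi> S' T'"
    using Suc(1)[of S' T'] Suc.prems by (auto simp: S'_def T'_def)
  define \<psi> where "\<psi> = \<phi>(Max S := Max T)"
  have mS: "Max S \<in> S" "Max T \<in> T" using ne Suc.prems Max_in by auto
  have lt: "x \<in> S' \<Longrightarrow> \<psi> x < Max T" for x
  proof -
    assume x: "x \<in> S'"
    then have "\<phi> x \<in> T'" using ph(2) bij_betwE by blast
    then show ?thesis using x Suc.prems by (auto simp: \<psi>_def S'_def T'_def intro: Max_ge order.not_eq_order_implies_strict)
  qed
  have "strict_mono_on S \<psi>"
  proof (rule strict_mono_onI)
    fix x y assume xy: "x \<in> S" "y \<in> S" "x < y"
    have "x \<noteq> Max S" using xy Suc.prems Max_ge[of S y] by (metis leD)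
    then have xS': "x \<in> S'" using xy by (auto simp: S'_def)
    show "\<psi> x < \<psi> y"
    proof (cases "y = Max S")
      case True then show ?thesis using lt[OF xS'] by (simp add: \<psi>_def)
    next
      case False
      then have "y \<in> S'" using xy by (auto simp: S'_def)
      then show ?thesis using ph(1) xS' xy False \<open>x \<noteq> Max S\<close>
        by (auto simp: \<psi>_def strict_mono_on_def)
    qed
  qed
  moreover have "bij_betw \<psi> S T"
  proof -
    have "bij_betw \<psi> S' T'"
      using ph(2) by (rule bij_betw_cong[THEN iffD1, rotated]) (auto simp: \<psi>_def S'_def)
    moreover have "S = insert (Max S) S'" "T = insert (Max T) T'" using mS by (auto simp: S'_def T'_def)
    ultimately show ?thesis
      using notIn_Un_bij_betw[of "Max S" S' \<psi> T'] by (simp add: S'_def T'_def \<psi>_def)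
  qed
  ultimately show ?case by blast
qed


lemma gen_alg_gen_sub:
  assumes "\<forall>s\<in>dsubsets J d. X s \<in> measurable M N"
  shows "{X s -` A \<inter> space M | s A. s \<in> dsubsets J d \<and> A \<in> sets N} \<subseteq> sets M"
  using assms by (auto intro: measurable_sets)

lemma gen_alg_basic:
  assumes "\<forall>s\<in>dsubsets J d. X s \<in> measurable M N"
  shows "space (gen_alg M X N d J) = space M"
    and "sets (gen_alg M X N d J) = sigma_sets (space M) {X s -` A \<inter> space M | s A. s \<in> dsubsets J d \<and> A \<in> sets N}"
    and "sets (gen_alg M X N d J) \<subseteq> sets M"
proof -
  have sub: "{X s -` A \<inter> space M | s A. s \<in> dsubsets J d \<and> A \<in> sets N} \<subseteq> Pow (space M)" by auto
  show "space (gen_alg M X N d J) = space M" unfolding gen_alg_def using space_measure_of[OF sub] by simp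
  show 2: "sets (gen_alg M X N d J) = sigma_sets (space M) {X s -` A \<inter> space M | s A. s \<in> dsubsets J d \<and> A \<in> sets N}"
    unfolding gen_alg_def using sets_measure_of[OF sub] by simp
  show "sets (gen_alg M X N d J) \<subseteq> sets M" unfolding 2
    by (rule sets.sigma_sets_subset[OF gen_alg_gen_sub[OF assms]])
qed

lemma gen_alg_repr:
  assumes meas: "\<forall>s\<in>dsubsets J d. X s \<in> measurable M N"
    and A: "A \<in> sets (gen_alg M X N d J)"
  shows "\<exists>C \<in> sets (PiM (dsubsets J d) (\<lambda>_. N)). A = {\<omega> \<in> space M. (\<lambda>s\<in>dsubsets J d. X s \<omega>) \<in> C}"
proof -
  let ?XJ = "\<lambda>\<omega>. \<lambda>s\<in>dsubsets J d. X s \<omega>"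
  let ?P = "PiM (dsubsets J d) (\<lambda>_. N)"
  have XJm: "?XJ \<in> measurable M ?P" using meas by (intro measurable_restrict) auto
  let ?V = "vimage_algebra (space M) ?XJ ?P"
  have "sigma_sets (space M) {X s -` A \<inter> space M | s A. s \<in> dsubsets J d \<and> A \<in> sets N} \<subseteq> sets ?V"
  proof -
    have "{X s -` A \<inter> space M | s A. s \<in> dsubsets J d \<and> A \<in> sets N} \<subseteq> sets ?V"
    proof
      fix G assume "G \<in> {X s -` A \<inter> space M | s A. s \<in> dsubsets J d \<and> A \<in> sets N}"
      then obtain s B where sB: "s \<in> dsubsets J d" "B \<in> sets N" "G = X s -` B \<inter> space M" by auto
      have "(\<lambda>g. g s) \<in> measurable ?P N" using sB(1) by (rule measurable_component_singleton)
      then have S: "(\<lambda>g. g s) -` B \<inter> space ?P \<in> sets ?P" using sB(2) by (rule measurable_sets)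
      have "G = ?XJ -` ((\<lambda>g. g s) -` B \<inter> space ?P) \<inter> space M"
        using sB measurable_space[OF XJm] by auto
      then show "G \<in> sets ?V" using in_vimage_algebra[OF S, of ?XJ "space M"] by simp
    qed
    then show ?thesis using sets.sigma_sets_subset[of _ ?V] by (simp add: space_vimage_algebra)
  qed
  then have "A \<in> sets ?V" using A gen_alg_basic(2)[OF meas] by auto
  then obtain C where "C \<in> sets ?P" "A = ?XJ -` C \<inter> space M"
    using sets_vimage_algebra2[of ?XJ "space M" ?P] measurable_space[OF XJm] by auto
  then show ?thesis by blast
qed

lemma gen_alg_mem:
  assumes meas: "\<forall>s\<in>dsubsets J d. X s \<in> measurable M N"
    and psi: "\<And>s. s \<in> D \<Longrightarrow> \<psi> s \<in> dsubsets J d"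
    and C: "C \<in> sets (PiM D (\<lambda>_. N))"
  shows "{\<omega> \<in> space M. (\<lambda>s\<in>D. X (\<psi> s) \<omega>) \<in> C} \<in> sets (gen_alg M X N d J)"
proof -
  let ?G = "gen_alg M X N d J"
  have "(\<lambda>\<omega>. \<lambda>s\<in>D. X (\<psi> s) \<omega>) \<in> measurable ?G (PiM D (\<lambda>_. N))"
  proof (intro measurable_restrict measurableI)
    fix s x assume "s \<in> D" "x \<in> space ?G"
    then show "X (\<psi> s) x \<in> space N" using meas psi gen_alg_basic(1)[OF meas] measurable_space by metis
  next
    fix s B assume s: "s \<in> D" and B: "B \<in> sets N"
    have "X (\<psi> s) -` B \<inter> space M \<in> {X s -` A \<inter> space M | s A. s \<in> dsubsets J d \<and> A \<in> sets N}"
      using psi[OF s] B by blast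
    then show "X (\<psi> s) -` B \<inter> space ?G \<in> sets ?G"
      using gen_alg_basic[OF meas] by (auto intro: sigma_sets.Basic)
  qed
  from measurable_sets[OF this C] show ?thesis using gen_alg_basic(1)[OF meas]
    by (simp add: vimage_def Int_def conj_commute)
qed


lemma dsubsets_mono: "J \<subseteq> J' \<Longrightarrow> dsubsets J d \<subseteq> dsubsets J' d"
  by (auto simp: dsubsets_def)

lemma img_dsub:
  assumes "inj_on \<phi> S" "\<phi> ` S \<subseteq> T" "s \<in> dsubsets S d"
  shows "\<phi> ` s \<in> dsubsets T d"
  using assms by (auto simp: dsubsets_def card_image inj_on_subset)

lemma transfer:
  assumes meas: "\<forall>s\<in>dsubsets {1..n} d. X s \<in> measurable M N"
    and sp: "spreadable M X N n d"
    and J0: "J0 \<subseteq> {1..n}" and K0: "K0 \<subseteq> {1..n}" and c: "card J0 = card K0" "d \<le> card J0"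
    and ph: "strict_mono_on J0 \<phi>" "bij_betw \<phi> J0 K0"
    and S: "S \<in> sets (PiM (dsubsets J0 d) (\<lambda>_. N))"
  shows "measure M {\<omega>\<in>space M. (\<lambda>s\<in>dsubsets J0 d. X s \<omega>) \<in> S}
       = measure M {\<omega>\<in>space M. (\<lambda>s\<in>dsubsets J0 d. X (\<phi> ` s) \<omega>) \<in> S}"
proof -
  let ?P = "PiM (dsubsets J0 d) (\<lambda>_. N)"
  have eq: "distr M ?P (\<lambda>\<omega>. \<lambda>s\<in>dsubsets J0 d. X (\<phi> ` s) \<omega>) = distr M ?P (\<lambda>\<omega>. \<lambda>s\<in>dsubsets J0 d. X s \<omega>)"
    using sp J0 K0 c ph unfolding spreadable_def by blast
  have m1: "(\<lambda>\<omega>. \<lambda>s\<in>dsubsets J0 d. X s \<omega>) \<in> measurable M ?P"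
    using meas dsubsets_mono[OF J0, of d] by (intro measurable_restrict) auto
  have m2: "(\<lambda>\<omega>. \<lambda>s\<in>dsubsets J0 d. X (\<phi> ` s) \<omega>) \<in> measurable M ?P"
  proof (intro measurable_restrict)
    fix s assume "s \<in> dsubsets J0 d"
    then have "\<phi> ` s \<in> dsubsets K0 d" using ph(2) by (intro img_dsub) (auto simp: bij_betw_def)
    then show "X (\<phi> ` s) \<in> measurable M N" using meas dsubsets_mono[OF K0, of d] by auto
  qed
  have "measure M {\<omega>\<in>space M. (\<lambda>s\<in>dsubsets J0 d. X s \<omega>) \<in> S} = measure (distr M ?P (\<lambda>\<omega>. \<lambda>s\<in>dsubsets J0 d. X s \<omega>)) S"
    using measure_distr[OF m1 S] by (simp add: vimage_def Int_def conj_commute)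
  also have "\<dots> = measure (distr M ?P (\<lambda>\<omega>. \<lambda>s\<in>dsubsets J0 d. X (\<phi> ` s) \<omega>)) S" using eq by simp
  also have "\<dots> = measure M {\<omega>\<in>space M. (\<lambda>s\<in>dsubsets J0 d. X (\<phi> ` s) \<omega>) \<in> S}"
    using measure_distr[OF m2 S] by (simp add: vimage_def Int_def conj_commute)
  finally show ?thesis .
qed


lemma cond_exp_bound:
  assumes P: "prob_space M" and sf: "sigma_finite_subalgebra M G"
    and A: "A \<in> sets G" and B: "B \<in> sets M"
    and hm: "h \<in> borel_measurable M" and hB: "\<And>\<omega>. \<omega> \<in> space M \<Longrightarrow> h \<omega> = indicator B \<omega>"
    and c: "0 \<le> c"
  shows "\<bar>measure M (A \<inter> B) - measure M A * measure M B\<bar>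
     \<le> c + measure M {\<omega>\<in>space M. c \<le> \<bar>real_cond_exp M G h \<omega> - (\<integral>\<omega>. h \<omega> \<partial>M)\<bar>}"
proof -
  interpret prob_space M by (rule P)
  interpret sigma_finite_subalgebra M G by (rule sf)
  have AM: "A \<in> sets M" using A subalg by (auto simp: subalgebra_def)
  have hint: "integrable M h"
    using hm hB by (intro integrable_const_bound[where B=1]) (auto simp: indicator_def)
  define Y where "Y = real_cond_exp M G h"
  define p where "p = (\<integral>\<omega>. h \<omega> \<partial>M)"
  have p: "p = measure M B"
  proof -
    have "p = (\<integral>\<omega>. indicator B \<omega> \<partial>M)" unfolding p_def
      by (rule Bochner_Integration.integral_cong) (auto simp: hB)
    then show ?thesis using B by (simp add: Int_absorb2 sets.sets_into_space)
  qed
  have p01: "0 \<le> p" "p \<le> 1" using p by auto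
  have Ym[measurable]: "Y \<in> borel_measurable M" unfolding Y_def by simp
  have Yint: "integrable M Y" unfolding Y_def using hint by (rule real_cond_exp_int)
  have Y0: "AE \<omega> in M. 0 \<le> Y \<omega>" unfolding Y_def
    using hint hB by (intro real_cond_exp_ge_c) (auto simp: indicator_def)
  have Y1: "AE \<omega> in M. Y \<omega> \<le> 1" unfolding Y_def
    using hint hB by (intro real_cond_exp_le_c) (auto simp: indicator_def)
  define E where "E = {\<omega>\<in>space M. c \<le> \<bar>Y \<omega> - p\<bar>}"
  have EM: "E \<in> sets M" unfolding E_def by measurable
  have AB: "measure M (A \<inter> B) = (\<integral>\<omega>. indicator A \<omega> * h \<omega> \<partial>M)"
  proof -
    have "(\<integral>\<omega>. indicator A \<omega> * h \<omega> \<partial>M) = (\<integral>\<omega>. indicator (A \<inter> B) \<omega> \<partial>M)"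
      by (rule Bochner_Integration.integral_cong) (auto simp: hB indicator_def)
    then show ?thesis using AM B by (simp add: Int_absorb2 sets.sets_into_space)
  qed
  also have "\<dots> = (\<integral>\<omega>. indicator A \<omega> * Y \<omega> \<partial>M)"
    using real_cond_exp_intA[OF hint A] unfolding Y_def set_lebesgue_integral_def by simp
  finally have AB2: "measure M (A \<inter> B) = (\<integral>\<omega>. indicator A \<omega> * Y \<omega> \<partial>M)" .
  have Ap: "measure M A * p = (\<integral>\<omega>. indicator A \<omega> * p \<partial>M)"
    using AM by simp
  have iA: "integrable M (\<lambda>\<omega>. indicator A \<omega> * Y \<omega>)"
    using integrable_mult_indicator[OF AM Yint] by simp
  have iAp: "integrable M (\<lambda>\<omega>. indicator A \<omega> * p)"
    using integrable_mult_indicator[OF AM integrable_const[of p]] by simp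
  have diff: "measure M (A \<inter> B) - measure M A * measure M B = (\<integral>\<omega>. indicator A \<omega> * (Y \<omega> - p) \<partial>M)"
    unfolding AB2 p[symmetric] Ap using iA iAp by (simp add: right_diff_distrib)
  have iD: "integrable M (\<lambda>\<omega>. indicator A \<omega> * (Y \<omega> - p))"
    using iA iAp by (simp add: right_diff_distrib)
  have iR: "integrable M (\<lambda>\<omega>. c + indicator E \<omega>)"
    using Bochner_Integration.integrable_add[OF integrable_const[of c] integrable_mult_indicator[OF EM integrable_const[of 1]]] by simp
  have pt: "AE \<omega> in M. \<bar>indicator A \<omega> * (Y \<omega> - p)\<bar> \<le> c + indicator E \<omega>"
    using Y0 Y1
  proof eventually_elim
    case (elim \<omega>)
    show ?case
    proof (cases "\<omega> \<in> space M")
      case True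
      have "\<bar>indicator A \<omega> * (Y \<omega> - p)\<bar> \<le> \<bar>Y \<omega> - p\<bar>" by (auto simp: indicator_def)
      also have "\<dots> \<le> c + indicator E \<omega>"
        using elim p01 c True by (auto simp: E_def indicator_def)
      finally show ?thesis .
    next
      case False
      then show ?thesis using AM c sets.sets_into_space by (auto simp: indicator_def E_def)
    qed
  qed
  have "\<bar>\<integral>\<omega>. indicator A \<omega> * (Y \<omega> - p) \<partial>M\<bar> \<le> (\<integral>\<omega>. c + indicator E \<omega> \<partial>M)"
  proof -
    have "(\<integral>\<omega>. indicator A \<omega> * (Y \<omega> - p) \<partial>M) \<le> (\<integral>\<omega>. c + indicator E \<omega> \<partial>M)"
      by (rule integral_mono_AE[OF iD iR]) (use pt in \<open>auto elim: AE_mp\<close>)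
    moreover have "- (\<integral>\<omega>. indicator A \<omega> * (Y \<omega> - p) \<partial>M) \<le> (\<integral>\<omega>. c + indicator E \<omega> \<partial>M)"
      unfolding integral_minus[symmetric]
      by (rule integral_mono_AE[OF integrable_minus[OF iD] iR]) (use pt in \<open>auto elim: AE_mp\<close>)
    ultimately show ?thesis by linarith
  qed
  also have "\<dots> = c + measure M E"
  proof -
    have iE: "integrable M (indicator E :: 'a \<Rightarrow> real)"
      using integrable_mult_indicator[OF EM integrable_const[of "1::real"]] by simp
    have "(\<integral>\<omega>. c + indicator E \<omega> \<partial>M) = (\<integral>\<omega>. c \<partial>M) + (\<integral>\<omega>. indicator E \<omega> \<partial>M)"
      by (rule Bochner_Integration.integral_add[OF integrable_const iE])
    then show ?thesis using EM prob_space by (simp add: Int_absorb2 sets.sets_into_space)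
  qed
  finally show ?thesis unfolding diff E_def Y_def p_def .
qed


theorem proposition2p8:
  fixes M :: "'a measure" and X :: "nat set \<Rightarrow> 'a \<Rightarrow> 'b" and N :: "'b measure"
    and n d l :: nat and \<beta> :: real
  assumes "prob_space M"
    and "0 < d" and "d \<le> l" and "l \<le> n"
    and "0 < \<beta>" and "\<beta> \<le> 1"
    and "\<forall>s \<in> dsubsets {1..n} d. X s \<in> measurable M N"
    and "spreadable M X N n d"
    and "\<not> dissociated M X N n d \<beta> l"
  shows "\<exists>f. f \<in> borel_measurable (PiM (dsubsets {1..n} d) (\<lambda>_. N)) \<and> (\<forall>x. f x \<in> {0, 1}) \<and>
    (\<forall>I. I \<subseteq> {1..n} \<and> card I = l \<longrightarrow>
       measure M {\<omega> \<in> space M.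
          \<bar>real_cond_exp M (gen_alg M X N d I) (\<lambda>\<omega>. f (\<lambda>s\<in>dsubsets {1..n} d. X s \<omega>)) \<omega>
           - (\<integral>\<omega>'. f (\<lambda>s\<in>dsubsets {1..n} d. X s \<omega>') \<partial>M)\<bar> \<ge> \<beta> / 2} \<ge> \<beta> / 2)"
proof -
  note P = assms(1) and meas = assms(7) and sp = assms(8)
  interpret prob_space M by (rule P)
  obtain J K A B where J: "J \<subseteq> {1..n}" and K: "K \<subseteq> {1..n}" and dJ: "d \<le> card J" and dK: "d \<le> card K"
    and JKl: "card J + card K \<le> l" and MM: "Max J < Min K"
    and A: "A \<in> sets (gen_alg M X N d J)" and B: "B \<in> sets (gen_alg M X N d K)"
    and big: "\<beta> < \<bar>measure M (A \<inter> B) - measure M A * measure M B\<bar>"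
    using assms(9) unfolding dissociated_def by (auto simp: not_le)
  have fJ: "finite J" and fK: "finite K" using J K finite_subset by auto
  have neJ: "J \<noteq> {}" and neK: "K \<noteq> {}" using dJ dK assms(2) by auto
  have JK_lt: "x < y" if "x \<in> J" "y \<in> K" for x y
    using Max_ge[OF fJ that(1)] Min_le[OF fK that(2)] MM by linarith
  have disj: "J \<inter> K = {}" using JK_lt by fastforce
  have measJ: "\<forall>s\<in>dsubsets J d. X s \<in> measurable M N" using meas dsubsets_mono[OF J, of d] by auto
  have measK: "\<forall>s\<in>dsubsets K d. X s \<in> measurable M N" using meas dsubsets_mono[OF K, of d] by auto
  obtain C where C: "C \<in> sets (PiM (dsubsets J d) (\<lambda>_. N))" and AC: "A = {\<omega> \<in> space M. (\<lambda>s\<in>dsubsets J d. X s \<omega>) \<in> C}"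
    using gen_alg_repr[OF measJ A] by blast
  obtain D where D: "D \<in> sets (PiM (dsubsets K d) (\<lambda>_. N))" and BD: "B = {\<omega> \<in> space M. (\<lambda>s\<in>dsubsets K d. X s \<omega>) \<in> D}"
    using gen_alg_repr[OF measK B] by blast
  define j where "j = card J"
  define k where "k = card K"
  define Ks where "Ks = {n - k + 1..n}"
  have kn: "k \<le> n" using JKl assms(4) unfolding k_def by linarith
  have cKs: "card Ks = k" using kn unfolding Ks_def by simp
  have Ksn: "Ks \<subseteq> {1..n}" unfolding Ks_def by auto
  obtain \<phi>K where \<phi>K: "strict_mono_on K \<phi>K" "bij_betw \<phi>K K Ks"
    using mono_bij_exists[OF fK _ ] cKs unfolding k_def by (metis finite_atLeastAtMost Ks_def)
  have \<phi>Kdsub: "\<phi>K ` s \<in> dsubsets {1..n} d" if "s \<in> dsubsets K d" for s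
    using img_dsub[of \<phi>K K "{1..n}" s d] \<phi>K(2) Ksn that by (auto simp: bij_betw_def)
  define f :: "(nat set \<Rightarrow> 'b) \<Rightarrow> real" where "f = (\<lambda>x. indicator D (\<lambda>s\<in>dsubsets K d. x (\<phi>K ` s)))"
  let ?Pn = "PiM (dsubsets {1..n} d) (\<lambda>_. N)"
  have fm: "f \<in> borel_measurable ?Pn"
  proof -
    have "(\<lambda>x. \<lambda>s\<in>dsubsets K d. x (\<phi>K ` s)) \<in> measurable ?Pn (PiM (dsubsets K d) (\<lambda>_. N))"
      by (intro measurable_restrict measurable_component_singleton \<phi>Kdsub)
    from measurable_compose[OF this borel_measurable_indicator[OF D]] show ?thesis
      unfolding f_def by (simp add: o_def)
  qed
  have f01: "\<forall>x. f x \<in> {0, 1}" unfolding f_def by (simp add: indicator_def)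
  define B' where "B' = {\<omega> \<in> space M. (\<lambda>s\<in>dsubsets K d. X (\<phi>K ` s) \<omega>) \<in> D}"
  have hB: "f (\<lambda>s\<in>dsubsets {1..n} d. X s \<omega>) = indicator B' \<omega>" if "\<omega> \<in> space M" for \<omega>
  proof -
    have "(\<lambda>s\<in>dsubsets K d. (\<lambda>s\<in>dsubsets {1..n} d. X s \<omega>) (\<phi>K ` s)) = (\<lambda>s\<in>dsubsets K d. X (\<phi>K ` s) \<omega>)"
      using \<phi>Kdsub by (intro restrict_ext) auto
    then show ?thesis using that unfolding f_def B'_def by (simp add: indicator_def)
  qed
  have XNm: "(\<lambda>\<omega>. \<lambda>s\<in>dsubsets {1..n} d. X s \<omega>) \<in> measurable M ?Pn"
    using meas by (intro measurable_restrict) auto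
  have hm: "(\<lambda>\<omega>. f (\<lambda>s\<in>dsubsets {1..n} d. X s \<omega>)) \<in> borel_measurable M"
    using measurable_compose[OF XNm fm] by (simp add: o_def)
  have B'M: "B' \<in> sets M"
    unfolding B'_def
    using gen_alg_mem[OF meas, of "dsubsets K d" "\<lambda>s. \<phi>K ` s" D] \<phi>Kdsub D gen_alg_basic(3)[OF meas] by blast
  have main: "\<forall>I. I \<subseteq> {1..n} \<and> card I = l \<longrightarrow>
       measure M {\<omega> \<in> space M.
          \<bar>real_cond_exp M (gen_alg M X N d I) (\<lambda>\<omega>. f (\<lambda>s\<in>dsubsets {1..n} d. X s \<omega>)) \<omega>
           - (\<integral>\<omega>'. f (\<lambda>s\<in>dsubsets {1..n} d. X s \<omega>') \<partial>M)\<bar> \<ge> \<beta> / 2} \<ge> \<beta> / 2"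
  proof (intro allI impI)
    fix I assume I: "I \<subseteq> {1..n} \<and> card I = l"
    have measI: "\<forall>s\<in>dsubsets I d. X s \<in> measurable M N" using meas dsubsets_mono[of I "{1..n}" d] I by auto
    have fI: "finite I" using I finite_subset by blast
    have "card I \<le> card (I - Ks) + card Ks"
      using card_Un_le[of "I - Ks" Ks] card_mono[of "(I - Ks) \<union> Ks" I] fI
      by (metis Un_Diff_cancel2 card_Un_le card_mono finite_Un finite_atLeastAtMost sup_ge1 Ks_def order_trans)
    then have "j \<le> card (I - Ks)" using I cKs JKl unfolding j_def k_def by linarith
    then obtain J' where J': "J' \<subseteq> I - Ks" "card J' = j" "finite J'" by (rule obtain_subset_with_card_n)
    obtain g where g: "strict_mono_on J g" "bij_betw g J J'"
      using mono_bij_exists[OF fJ J'(3)] J'(2) unfolding j_def by metis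
    have J'lt: "x < n - k + 1" if "x \<in> J'" for x
    proof -
      have "x \<in> I" "x \<notin> Ks" using that J' by auto
      then have "x \<le> n" using I by auto
      then show ?thesis using \<open>x \<notin> Ks\<close> unfolding Ks_def by auto
    qed
    have Ksge: "n - k + 1 \<le> x" if "x \<in> Ks" for x using that unfolding Ks_def by auto
    define \<phi> where "\<phi> = (\<lambda>x. if x \<in> K then \<phi>K x else g x)"
    define J0 where "J0 = J \<union> K"
    define K0 where "K0 = J' \<union> Ks"
    have gJ: "g x \<in> J'" if "x \<in> J" for x using g(2) that bij_betwE by blast
    have \<phi>KK: "\<phi>K x \<in> Ks" if "x \<in> K" for x using \<phi>K(2) that bij_betwE by blast
    have smono: "strict_mono_on J0 \<phi>"
    proof (rule strict_mono_onI)
      fix x y assume xy: "x \<in> J0" "y \<in> J0" "x < y"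
      show "\<phi> x < \<phi> y"
      proof (cases "x \<in> K")
        case True
        then have "y \<in> K" using xy JK_lt unfolding J0_def by (metis Un_iff not_less_iff_gr_or_eq)
        then show ?thesis using True xy \<phi>K(1) by (auto simp: \<phi>_def strict_mono_on_def)
      next
        case False
        then have x: "x \<in> J" using xy unfolding J0_def by auto
        show ?thesis
        proof (cases "y \<in> K")
          case True
          then show ?thesis using False J'lt[OF gJ[OF x]] Ksge[OF \<phi>KK[OF True]] by (simp add: \<phi>_def)
        next
          case False
          then have "y \<in> J" using xy unfolding J0_def by auto
          then show ?thesis using False \<open>x \<notin> K\<close> x xy g(1) by (auto simp: \<phi>_def strict_mono_on_def)
        qed
      qed
    qed
    have J'Ks: "J' \<inter> Ks = {}" using J' by auto
    have bij: "bij_betw \<phi> J0 K0"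
    proof -
      have b1: "bij_betw \<phi> J J'"
        using g(2) by (rule bij_betw_cong[THEN iffD1, rotated]) (use disj in \<open>auto simp: \<phi>_def\<close>)
      have b2: "bij_betw \<phi> K Ks"
        using \<phi>K(2) by (rule bij_betw_cong[THEN iffD1, rotated]) (auto simp: \<phi>_def)
      show ?thesis using J'Ks bij_betw_combine[OF b1 b2] unfolding J0_def K0_def by simp
    qed
    have J0n: "J0 \<subseteq> {1..n}" using J K unfolding J0_def by auto
    have K0n: "K0 \<subseteq> {1..n}" using J' I Ksn unfolding K0_def by auto
    have cJ0: "card J0 = j + k" using card_Un_disjoint[OF fJ fK disj] unfolding J0_def j_def k_def by simp
    have cK0: "card K0 = j + k" using card_Un_disjoint[OF J'(3) _ J'Ks] J'(2) cKs unfolding K0_def Ks_def by simp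
    show "\<beta> / 2 \<le> measure M {\<omega> \<in> space M.
          \<beta> / 2 \<le> \<bar>real_cond_exp M (gen_alg M X N d I) (\<lambda>\<omega>. f (\<lambda>s\<in>dsubsets {1..n} d. X s \<omega>)) \<omega>
           - (\<integral>\<omega>'. f (\<lambda>s\<in>dsubsets {1..n} d. X s \<omega>') \<partial>M)\<bar>}"
    proof -
      let ?P = "PiM (dsubsets J0 d) (\<lambda>_. N)"
      define Y where "Y = (\<lambda>\<omega>. \<lambda>s\<in>dsubsets J0 d. X (\<phi> ` s) \<omega>)"
      define XJ0 where "XJ0 = (\<lambda>\<omega>. \<lambda>s\<in>dsubsets J0 d. X s \<omega>)"
      have dsJ: "dsubsets J d \<subseteq> dsubsets J0 d" and dsK: "dsubsets K d \<subseteq> dsubsets J0 d"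
        unfolding J0_def by (auto simp: dsubsets_def)
      define SA where "SA = (\<lambda>x. restrict x (dsubsets J d)) -` C \<inter> space ?P"
      define SB where "SB = (\<lambda>x. restrict x (dsubsets K d)) -` D \<inter> space ?P"
      have SA: "SA \<in> sets ?P" unfolding SA_def
        by (rule measurable_sets[OF measurable_restrict_subset[OF dsJ] C])
      have SB: "SB \<in> sets ?P" unfolding SB_def
        by (rule measurable_sets[OF measurable_restrict_subset[OF dsK] D])
      have XJ0m: "XJ0 \<in> measurable M ?P" unfolding XJ0_def
        using meas dsubsets_mono[OF J0n, of d] by (intro measurable_restrict) auto
      have \<phi>dsub: "\<phi> ` s \<in> dsubsets {1..n} d" if "s \<in> dsubsets J0 d" for s
        using img_dsub[of \<phi> J0 "{1..n}" s d] bij K0n that by (auto simp: bij_betw_def)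
      have Ym: "Y \<in> measurable M ?P" unfolding Y_def
        using meas \<phi>dsub by (intro measurable_restrict) auto
      have eqA: "A = {\<omega>\<in>space M. XJ0 \<omega> \<in> SA}"
        unfolding AC SA_def XJ0_def using measurable_space[OF XJ0m] dsJ
        by (auto simp: XJ0_def Int_absorb1 Int_absorb2)
      have eqB: "B = {\<omega>\<in>space M. XJ0 \<omega> \<in> SB}"
        unfolding BD SB_def XJ0_def using measurable_space[OF XJ0m] dsK
        by (auto simp: XJ0_def Int_absorb1 Int_absorb2)
      define A' where "A' = {\<omega>\<in>space M. Y \<omega> \<in> SA}"
      have eqA': "A' = {\<omega>\<in>space M. (\<lambda>s\<in>dsubsets J d. X (\<phi> ` s) \<omega>) \<in> C}"
        unfolding A'_def SA_def Y_def using measurable_space[OF Ym] dsJ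
        by (auto simp: Y_def Int_absorb1 Int_absorb2)
      have resK: "(\<lambda>s\<in>dsubsets K d. X (\<phi> ` s) \<omega>) = (\<lambda>s\<in>dsubsets K d. X (\<phi>K ` s) \<omega>)" for \<omega>
      proof (rule restrict_ext)
        fix s assume "s \<in> dsubsets K d"
        then have "s \<subseteq> K" by (auto simp: dsubsets_def)
        then have "\<phi> ` s = \<phi>K ` s" by (auto simp: \<phi>_def)
        then show "X (\<phi> ` s) \<omega> = X (\<phi>K ` s) \<omega>" by simp
      qed
      have eqB': "B' = {\<omega>\<in>space M. Y \<omega> \<in> SB}"
        unfolding B'_def SB_def Y_def using measurable_space[OF Ym] dsK
        by (auto simp: Y_def Int_absorb1 Int_absorb2 resK)
      have A'G: "A' \<in> sets (gen_alg M X N d I)"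
        unfolding eqA'
      proof (rule gen_alg_mem[OF measI _ C])
        fix s assume s: "s \<in> dsubsets J d"
        then have "s \<subseteq> J" by (auto simp: dsubsets_def)
        then have "\<phi> ` s = g ` s" using disj by (auto simp: \<phi>_def)
        moreover have "g ` s \<in> dsubsets I d"
          using img_dsub[of g J I s d] g(2) J' s by (auto simp: bij_betw_def)
        ultimately show "\<phi> ` s \<in> dsubsets I d" by simp
      qed
      have tr: "measure M {\<omega>\<in>space M. XJ0 \<omega> \<in> S} = measure M {\<omega>\<in>space M. Y \<omega> \<in> S}"
        if "S \<in> sets ?P" for S
        unfolding XJ0_def Y_def
        using transfer[OF meas sp J0n K0n _ _ smono bij that] cJ0 cK0 dJ unfolding j_def by simp
      have mA: "measure M A = measure M A'" unfolding eqA A'_def by (rule tr[OF SA])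
      have mB: "measure M B = measure M B'" unfolding eqB eqB' by (rule tr[OF SB])
      have "A \<inter> B = {\<omega>\<in>space M. XJ0 \<omega> \<in> SA \<inter> SB}" "A' \<inter> B' = {\<omega>\<in>space M. Y \<omega> \<in> SA \<inter> SB}"
        unfolding eqA eqB A'_def eqB' by auto
      then have mAB: "measure M (A \<inter> B) = measure M (A' \<inter> B')" using tr[OF sets.Int[OF SA SB]] by simp
      have subalg: "subalgebra M (gen_alg M X N d I)"
        unfolding subalgebra_def using gen_alg_basic[OF measI] by simp
      have sf: "sigma_finite_subalgebra M (gen_alg M X N d I)"
        by (rule finite_measure_subalgebra_is_sigma_finite)
           (simp add: finite_measure_subalgebra_def finite_measure_subalgebra_axioms_def subalg finite_measure_axioms)
      note bnd = cond_exp_bound[OF P sf A'G B'M hm hB, of "\<beta> / 2"]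
      show ?thesis using bnd assms(5) big mA mB mAB by simp
    qed
  qed
  show ?thesis using fm f01 main by blast
qed

end
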